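(* Given $\alpha>0$ there exists $C>0$ such that for every $\rho>0$ and every $u\in C((-\rho,\rho))$, $$\ell^\alpha(\rho)\sup_{\varepsilon\in(0,\rho)}\ell^{-\alpha}(\varepsilon)\|\delta_\varepsilon u\|_{L^\infty(-\rho,\rho-\varepsilon)}\le C\Big(\operatorname{osc}_{(-\rho,\rho)}u+\ell^\alpha(\rho)\sup_{\varepsilon\in(0,\rho)}\ell^{-\alpha}(\varepsilon)\|\delta^2_\varepsilon u\|_{L^\infty(-\rho,\rho-2\varepsilon)}\Big),$$ where norms over empty intervals are interpreted as $0$.
   Context: $\ell(\rho):=|\ln(\min\{\rho,1/10\})|^{-1}$ for $\rho>0$. $\delta_\varepsilon u(x):=u(x+\varepsilon)-u(x)$ and $\delta^2_\varepsilon u(x):=u(x+2\varepsilon)-2u(x+\varepsilon)+u(x)$. $\operatorname{osc}_Eu:=\sup_Eu-\inf_Eu$. *)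

theory Defs
  imports "HOL-Analysis.Analysis"
begin

definition ell :: "real \<Rightarrow> real" where
  "ell \<rho> = inverse \<bar>ln (min \<rho> (1/10))\<bar>"

definition delta1 :: "real \<Rightarrow> (real \<Rightarrow> real) \<Rightarrow> real \<Rightarrow> real" where
  "delta1 \<epsilon> u x = u (x + \<epsilon>) - u x"

definition delta2 :: "real \<Rightarrow> (real \<Rightarrow> real) \<Rightarrow> real \<Rightarrow> real" where
  "delta2 \<epsilon> u x = u (x + 2 * \<epsilon>) - 2 * u (x + \<epsilon>) + u x"

text \<open>Sup-norm of f on the open interval (a,b), valued in the extended reals;
  equals 0 when the interval is empty. For continuous f this is the L-infinity norm.\<close>
definition supnorm :: "(real \<Rightarrow> real) \<Rightarrow> real \<Rightarrow> real \<Rightarrow> ereal" where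
  "supnorm f a b = Sup ({0} \<union> (\<lambda>x. ereal \<bar>f x\<bar>) ` {a<..<b})"

definition osc :: "(real \<Rightarrow> real) \<Rightarrow> real \<Rightarrow> real \<Rightarrow> ereal" where
  "osc u a b = (SUP x\<in>{a<..<b}. ereal (u x)) - (INF x\<in>{a<..<b}. ereal (u x))"

end

theory Submission imports Defs begin

definition TT :: "real \<Rightarrow> real" where "TT e = \<bar>ln (min e (1/10))\<bar>"

lemma ln_min_neg: "(e::real) > 0 \<Longrightarrow> ln (min e (1/10)) \<le> - ln 10"
proof -
  assume e: "e > 0"
  have "ln (min e (1/10)) \<le> ln (1/10::real)" using e by (subst ln_le_cancel_iff) auto
  also have "ln (1/10::real) = - ln 10" by (simp add: ln_div)
  finally show ?thesis .
qed

lemma TT_eq: "e > 0 \<Longrightarrow> TT e = - ln (min e (1/10))"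
  using ln_min_neg[of e] by (simp add: TT_def)

lemma TT_ge: "e > 0 \<Longrightarrow> ln 10 \<le> TT e"
  using ln_min_neg[of e] TT_eq[of e] by simp

lemma TT_pos: "e > 0 \<Longrightarrow> 0 < TT e"
proof -
  assume "e > 0" hence "ln 10 \<le> TT e" by (rule TT_ge)
  moreover have "ln (10::real) > 0" by simp
  ultimately show ?thesis by linarith
qed

lemma TT_mono: "0 < e \<Longrightarrow> e \<le> e' \<Longrightarrow> TT e' \<le> TT e"
proof -
  assume a: "0 < e" "e \<le> e'"
  have "ln (min e (1/10)) \<le> ln (min e' (1/10))" using a by (subst ln_le_cancel_iff) auto
  thus ?thesis using a TT_eq[of e] TT_eq[of e'] by simp
qed

lemma TT_double: "0 < e \<Longrightarrow> TT e \<le> TT (2*e) + ln 2"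
proof -
  assume a: "0 < e"
  have "min (2*e) (1/10) \<le> 2 * min e (1/10)" by simp
  hence "ln (min (2*e) (1/10)) \<le> ln (2 * min e (1/10))" using a by (subst ln_le_cancel_iff) auto
  also have "\<dots> = ln 2 + ln (min e (1/10))" using a by (simp add: ln_mult)
  finally show ?thesis using a TT_eq[of e] TT_eq[of "2*e"] by simp
qed

lemma ell_TT: "ell e = inverse (TT e)" by (simp add: ell_def TT_def)

definition hh :: "real \<Rightarrow> real \<Rightarrow> real" where "hh \<alpha> e = (TT e + 4*\<alpha>) powr (-\<alpha>)"
definition PP :: "real \<Rightarrow> real" where "PP \<alpha> = (1 + 4*\<alpha>/ln 10) powr \<alpha>"

lemma hh_pos: "\<alpha> > 0 \<Longrightarrow> e > 0 \<Longrightarrow> hh \<alpha> e > 0"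
  using TT_pos[of e] by (simp add: hh_def)

lemma hh_mono: "\<alpha> > 0 \<Longrightarrow> 0 < e \<Longrightarrow> e \<le> e' \<Longrightarrow> hh \<alpha> e \<le> hh \<alpha> e'"
proof -
  assume a: "\<alpha> > 0" "0 < e" "e \<le> e'"
  have p: "0 < TT e' + 4*\<alpha>" using TT_pos[of e'] a by simp
  have "(TT e' + 4*\<alpha>) powr \<alpha> \<le> (TT e + 4*\<alpha>) powr \<alpha>"
    using TT_mono[OF a(2,3)] p a by (intro powr_mono2) auto
  thus ?thesis using p a by (simp add: hh_def powr_minus divide_simps)
qed

lemma hh_double: "\<alpha> > 0 \<Longrightarrow> e > 0 \<Longrightarrow> hh \<alpha> (2*e) \<le> 3/2 * hh \<alpha> e"
proof -
  assume a: "\<alpha> > 0" "e > 0"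
  define s where "s = TT (2*e) + 4*\<alpha>"
  define t where "t = TT e + 4*\<alpha>"
  have s4: "s \<ge> 4*\<alpha>" using TT_pos[of "2*e"] a by (simp add: s_def)
  have sp: "s > 0" using s4 a by simp
  have tp: "t > 0" using TT_pos[of e] a by (simp add: t_def)
  have ts: "t \<le> s + ln 2" using TT_double[OF a(2)] by (simp add: s_def t_def)
  have l2: "ln (2::real) \<le> 1" using ln_le_minus_one[of 2] by simp
  have "t powr \<alpha> \<le> (s + ln 2) powr \<alpha>" using ts tp a by (intro powr_mono2) auto
  also have "s + ln 2 = s * (1 + ln 2 / s)" using sp by (simp add: field_simps)
  also have "(s * (1 + ln 2 / s)) powr \<alpha> = s powr \<alpha> * (1 + ln 2 / s) powr \<alpha>"
    by (simp add: powr_mult)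
  also have "(1 + ln 2 / s) powr \<alpha> \<le> exp (ln 2 / s) powr \<alpha>"
    using sp a by (intro powr_mono2) auto
  also have "exp (ln 2 / s) powr \<alpha> = exp (ln 2 / s * \<alpha>)" by (simp add: exp_powr_real)
  also have "exp (ln 2 / s * \<alpha>) \<le> 1 + 2 * (ln 2 / s * \<alpha>)"
  proof (rule real_exp_bound_lemma)
    show "0 \<le> ln 2 / s * \<alpha>" using sp a by simp
    have "ln 2 / s * \<alpha> \<le> 1 / s * \<alpha>" using sp a l2 by (intro mult_right_mono divide_right_mono) auto
    also have "\<dots> \<le> 1/4" using s4 a sp by (simp add: field_simps)
    finally show "ln 2 / s * \<alpha> \<le> 1/2" by linarith
  qed
  also have "1 + 2 * (ln 2 / s * \<alpha>) \<le> 3/2"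
  proof -
    have "ln 2 / s * \<alpha> \<le> 1 / s * \<alpha>" using sp a l2 by (intro mult_right_mono divide_right_mono) auto
    also have "\<dots> \<le> 1/4" using s4 a sp by (simp add: field_simps)
    finally show ?thesis by linarith
  qed
  finally have "t powr \<alpha> \<le> s powr \<alpha> * (3/2)" using sp by (simp add: mult_left_mono)
  then show ?thesis using sp tp
    by (simp add: hh_def powr_minus s_def[symmetric] t_def[symmetric] divide_simps)
qed

lemma hh_le_ell: "\<alpha> > 0 \<Longrightarrow> e > 0 \<Longrightarrow> hh \<alpha> e \<le> ell e powr \<alpha>"
proof -
  assume a: "\<alpha> > 0" "e > 0"
  have p: "TT e > 0" using TT_pos a by simp
  have "TT e powr \<alpha> \<le> (TT e + 4*\<alpha>) powr \<alpha>" using p a by (intro powr_mono2) auto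
  moreover have "ell e powr \<alpha> = inverse (TT e powr \<alpha>)" by (simp add: ell_TT inverse_powr)
  moreover have "0 < TT e powr \<alpha>" using p by simp
  ultimately show ?thesis unfolding hh_def powr_minus using p a
    by (simp add: le_imp_inverse_le)
qed

lemma ell_le_hh: "\<alpha> > 0 \<Longrightarrow> e > 0 \<Longrightarrow> ell e powr \<alpha> \<le> PP \<alpha> * hh \<alpha> e"
proof -
  assume a: "\<alpha> > 0" "e > 0"
  have p: "TT e > 0" using TT_pos a by simp
  have l10: "ln (10::real) > 0" by simp
  have "TT e + 4*\<alpha> \<le> (1 + 4*\<alpha>/ln 10) * TT e"
    using TT_ge[OF a(2)] a l10 by (simp add: field_simps)
  hence "(TT e + 4*\<alpha>) powr \<alpha> \<le> ((1 + 4*\<alpha>/ln 10) * TT e) powr \<alpha>"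
    using p a by (intro powr_mono2) auto
  also have "\<dots> = PP \<alpha> * TT e powr \<alpha>" by (simp add: PP_def powr_mult)
  finally have 1: "(TT e + 4*\<alpha>) powr \<alpha> \<le> PP \<alpha> * TT e powr \<alpha>" .
  have 2: "ell e powr \<alpha> = inverse (TT e powr \<alpha>)" by (simp add: ell_TT inverse_powr)
  have 3: "0 < TT e powr \<alpha>" "0 < (TT e + 4*\<alpha>) powr \<alpha>" using p a by auto
  show ?thesis unfolding 2 hh_def powr_minus using 1 3
    by (simp add: field_simps)
qed

lemma PP_ge1: "\<alpha> > 0 \<Longrightarrow> PP \<alpha> \<ge> 1"
  unfolding PP_def by (rule ge_one_powr_ge_zero) auto


lemma core:
  fixes \<alpha> \<rho> A B :: real and u :: "real \<Rightarrow> real"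
  assumes a: "\<alpha> > 0" and r: "\<rho> > 0" and A0: "A \<ge> 0" and B0: "B \<ge> 0"
  and HA: "\<And>a b. a \<in> {-\<rho><..<\<rho>} \<Longrightarrow> b \<in> {-\<rho><..<\<rho>} \<Longrightarrow> \<bar>u a - u b\<bar> \<le> A"
  and HB: "\<And>\<eta> y. \<eta> \<in> {0<..<\<rho>} \<Longrightarrow> y \<in> {-\<rho><..<\<rho>-2*\<eta>} \<Longrightarrow> \<bar>delta2 \<eta> u y\<bar> \<le> B * ell \<eta> powr \<alpha>"
  and e: "\<epsilon> \<in> {0<..<\<rho>}" and x: "x \<in> {-\<rho><..<\<rho>-\<epsilon>}"
  shows "\<bar>delta1 \<epsilon> u x\<bar> \<le> (3/2 * A / hh \<alpha> \<rho> + 2 * PP \<alpha> * B) * hh \<alpha> \<epsilon>"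
proof -
  define M where "M = 3/2 * A / hh \<alpha> \<rho> + 2 * PP \<alpha> * B"
  have hr: "hh \<alpha> \<rho> > 0" using hh_pos a r by simp
  have P1: "PP \<alpha> \<ge> 1" using PP_ge1 a by simp
  have M0: "M \<ge> 0" using A0 B0 hr P1 by (simp add: M_def)
  have base: "\<bar>delta1 \<epsilon> u x\<bar> \<le> M * hh \<alpha> \<epsilon>"
    if e: "\<epsilon> \<in> {0<..<\<rho>}" "\<epsilon> \<ge> \<rho>/2" and x: "x \<in> {-\<rho><..<\<rho>-\<epsilon>}" for \<epsilon> x
  proof -
    have "\<bar>delta1 \<epsilon> u x\<bar> \<le> A" unfolding delta1_def using e x by (intro HA) auto
    have "hh \<alpha> \<rho> \<le> 3/2 * hh \<alpha> (\<rho>/2)" using hh_double[OF a, of "\<rho>/2"] r by simp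
    also have "hh \<alpha> (\<rho>/2) \<le> hh \<alpha> \<epsilon>" using hh_mono[OF a, of "\<rho>/2" \<epsilon>] e r by simp
    finally have hh1: "hh \<alpha> \<rho> \<le> 3/2 * hh \<alpha> \<epsilon>" by simp
    have "A = A / hh \<alpha> \<rho> * hh \<alpha> \<rho>" using hr by simp
    also have "\<dots> \<le> A / hh \<alpha> \<rho> * (3/2 * hh \<alpha> \<epsilon>)" using hh1 A0 hr by (intro mult_left_mono) auto
    also have "\<dots> = (3/2 * A / hh \<alpha> \<rho>) * hh \<alpha> \<epsilon>" by simp
    also have "\<dots> \<le> M * hh \<alpha> \<epsilon>" unfolding M_def using hh_pos[OF a, of \<epsilon>] e B0 P1
      by (intro mult_right_mono) auto
    finally show ?thesis using \<open>\<bar>delta1 \<epsilon> u x\<bar> \<le> A\<close> by linarith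
  qed
  have ind: "\<forall>\<epsilon> x. \<rho> / 2^(n+1) \<le> \<epsilon> \<longrightarrow> \<epsilon> \<in> {0<..<\<rho>} \<longrightarrow> x \<in> {-\<rho><..<\<rho>-\<epsilon>} \<longrightarrow>
       \<bar>delta1 \<epsilon> u x\<bar> \<le> M * hh \<alpha> \<epsilon>" for n
  proof (induction n)
    case 0
    then show ?case using base by auto
  next
    case (Suc n)
    show ?case
    proof (intro allI impI)
      fix \<epsilon> x assume n: "\<rho> / 2^(Suc n+1) \<le> \<epsilon>" and e: "\<epsilon> \<in> {0<..<\<rho>}" and x: "x \<in> {-\<rho><..<\<rho>-\<epsilon>}"
      show "\<bar>delta1 \<epsilon> u x\<bar> \<le> M * hh \<alpha> \<epsilon>"
      proof (cases "\<epsilon> \<ge> \<rho>/2")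
        case True then show ?thesis using base e x by auto
      next
        case False
        have e2: "2*\<epsilon> \<in> {0<..<\<rho>}" using False e by auto
        have n2: "\<rho> / 2^(n+1) \<le> 2*\<epsilon>" using n by (simp add: field_simps)
        obtain y where y: "y \<in> {-\<rho><..<\<rho>-2*\<epsilon>}"
          and eq: "\<bar>delta1 \<epsilon> u x\<bar> \<le> (\<bar>delta1 (2*\<epsilon>) u y\<bar> + \<bar>delta2 \<epsilon> u y\<bar>) / 2"
        proof (cases "x < \<rho> - 2*\<epsilon>")
          case True
          have "delta1 \<epsilon> u x = (delta1 (2*\<epsilon>) u x - delta2 \<epsilon> u x) / 2"
            by (simp add: delta1_def delta2_def)
          then show ?thesis using that[of x] True x by auto
        next
          case F: False
          have "delta1 \<epsilon> u x = (delta1 (2*\<epsilon>) u (x-\<epsilon>) + delta2 \<epsilon> u (x-\<epsilon>)) / 2"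
            by (simp add: delta1_def delta2_def algebra_simps)
          moreover have "x - \<epsilon> \<in> {-\<rho><..<\<rho>-2*\<epsilon>}" using F False x e by auto
          ultimately show ?thesis using that[of "x-\<epsilon>"] by auto
        qed
        have d1: "\<bar>delta1 (2*\<epsilon>) u y\<bar> \<le> M * hh \<alpha> (2*\<epsilon>)"
          using Suc.IH n2 e2 y by auto
        have d2: "\<bar>delta2 \<epsilon> u y\<bar> \<le> B * ell \<epsilon> powr \<alpha>" using HB e y by auto
        have "M * hh \<alpha> (2*\<epsilon>) \<le> M * (3/2 * hh \<alpha> \<epsilon>)"
          using hh_double[OF a, of \<epsilon>] e M0 by (intro mult_left_mono) auto
        moreover have "B * ell \<epsilon> powr \<alpha> \<le> B * (PP \<alpha> * hh \<alpha> \<epsilon>)"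
          using ell_le_hh[OF a, of \<epsilon>] e B0 by (intro mult_left_mono) auto
        moreover have "B * PP \<alpha> \<le> M / 2" using A0 hr by (simp add: M_def)
        hence "B * (PP \<alpha> * hh \<alpha> \<epsilon>) \<le> M / 2 * hh \<alpha> \<epsilon>"
          using hh_pos[OF a, of \<epsilon>] e by (simp add: mult.assoc[symmetric] mult_right_mono)
        ultimately show ?thesis using eq d1 d2 by (simp add: field_simps)
      qed
    qed
  qed
  obtain n where "\<rho>/\<epsilon> < 2^n" using real_arch_pow[of 2 "\<rho>/\<epsilon>"] by auto
  hence "\<rho> / 2^(n+1) \<le> \<epsilon>" using e by (simp add: field_simps)
  thus ?thesis using ind[of n] e x by (simp add: M_def)
qed


lemma supnorm_nonneg: "0 \<le> supnorm f a b"
  unfolding supnorm_def by (rule Sup_upper) auto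

lemma osc_bound:
  assumes "x \<in> {a<..<b}" "y \<in> {a<..<b}"
  shows "ereal (u x - u y) \<le> osc u a b"
proof -
  have "ereal (u x) - ereal (u y) \<le> (SUP x\<in>{a<..<b}. ereal (u x)) - (INF x\<in>{a<..<b}. ereal (u x))"
    using assms by (intro ereal_minus_mono SUP_upper INF_lower) auto
  thus ?thesis by (simp add: osc_def)
qed

lemma ell_pos: "e > 0 \<Longrightarrow> ell e > 0"
  using TT_pos[of e] by (simp add: ell_TT)

theorem lemma4p9:
  fixes \<alpha> :: real
  assumes "\<alpha> > 0"
  shows "\<exists>C>0. \<forall>\<rho>>0. \<forall>u :: real \<Rightarrow> real. continuous_on {-\<rho><..<\<rho>} u \<longrightarrow>
    ereal (ell \<rho> powr \<alpha>) *
      (SUP \<epsilon>\<in>{0<..<\<rho>}. ereal (ell \<epsilon> powr (-\<alpha>)) * supnorm (delta1 \<epsilon> u) (-\<rho>) (\<rho> - \<epsilon>))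
    \<le> ereal C * (osc u (-\<rho>) \<rho> + ereal (ell \<rho> powr \<alpha>) *
      (SUP \<epsilon>\<in>{0<..<\<rho>}. ereal (ell \<epsilon> powr (-\<alpha>)) * supnorm (delta2 \<epsilon> u) (-\<rho>) (\<rho> - 2 * \<epsilon>)))"
proof (intro exI[of _ "2 * PP \<alpha>"] conjI allI impI)
  have P1: "PP \<alpha> \<ge> 1" using PP_ge1 assms by simp
  show "2 * PP \<alpha> > 0" using P1 by simp
  fix \<rho> :: real and u :: "real \<Rightarrow> real"
  assume r: "\<rho> > 0"
  define a where "a = ell \<rho> powr \<alpha>"
  define S1 where "S1 = (SUP \<epsilon>\<in>{0<..<\<rho>}. ereal (ell \<epsilon> powr (-\<alpha>)) * supnorm (delta1 \<epsilon> u) (-\<rho>) (\<rho> - \<epsilon>))"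
  define S2 where "S2 = (SUP \<epsilon>\<in>{0<..<\<rho>}. ereal (ell \<epsilon> powr (-\<alpha>)) * supnorm (delta2 \<epsilon> u) (-\<rho>) (\<rho> - 2 * \<epsilon>))"
  define Os where "Os = osc u (-\<rho>) \<rho>"
  have ap: "a > 0" using ell_pos[OF r] by (simp add: a_def)
  have Os0: "Os \<ge> 0" using osc_bound[of 0 "-\<rho>" \<rho> 0 u] r by (simp add: Os_def zero_ereal_def)
  have S20: "S2 \<ge> 0"
  proof -
    have "0 \<le> ereal (ell (\<rho>/2) powr (-\<alpha>)) * supnorm (delta2 (\<rho>/2) u) (-\<rho>) (\<rho> - 2 * (\<rho>/2))"
      by (intro ereal_0_le_mult supnorm_nonneg) auto
    also have "\<dots> \<le> S2" unfolding S2_def using r by (intro SUP_upper) auto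
    finally show ?thesis .
  qed
  show "ereal a * S1 \<le> ereal (2 * PP \<alpha>) * (Os + ereal a * S2)"
  proof (cases "Os = \<infinity> \<or> S2 = \<infinity>")
    case True
    have "Os + ereal a * S2 = \<infinity>" using True Os0 S20 ap by auto
    moreover have "ereal (2 * PP \<alpha>) * \<infinity> = \<infinity>" using P1 by simp
    ultimately have "ereal (2 * PP \<alpha>) * (Os + ereal a * S2) = \<infinity>" by (simp only:)
    then show ?thesis by (simp only: top_ereal_def[symmetric] top_greatest)
  next
    case False
    obtain A where A: "Os = ereal A" using False Os0 by (cases Os) auto
    obtain B where B: "S2 = ereal B" using False S20 by (cases S2) auto
    have A0: "A \<ge> 0" using Os0 A by simp
    have B0: "B \<ge> 0" using S20 B by simp
    have HA: "\<bar>u x - u y\<bar> \<le> A" if "x \<in> {-\<rho><..<\<rho>}" "y \<in> {-\<rho><..<\<rho>}" for x y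
      using osc_bound[OF that, of u] osc_bound[OF that(2,1), of u] A unfolding Os_def
      by (simp add: abs_le_iff)
    have HB: "\<bar>delta2 \<eta> u y\<bar> \<le> B * ell \<eta> powr \<alpha>"
      if "\<eta> \<in> {0<..<\<rho>}" "y \<in> {-\<rho><..<\<rho>-2*\<eta>}" for \<eta> y
    proof -
      have "ereal (ell \<eta> powr (-\<alpha>)) * ereal \<bar>delta2 \<eta> u y\<bar>
         \<le> ereal (ell \<eta> powr (-\<alpha>)) * supnorm (delta2 \<eta> u) (-\<rho>) (\<rho> - 2 * \<eta>)"
        unfolding supnorm_def using that by (intro ereal_mult_left_mono Sup_upper) auto
      also have "\<dots> \<le> S2" unfolding S2_def using that by (intro SUP_upper) auto
      finally have "ell \<eta> powr (-\<alpha>) * \<bar>delta2 \<eta> u y\<bar> \<le> B" using B by simp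
      hence "ell \<eta> powr \<alpha> * (ell \<eta> powr (-\<alpha>) * \<bar>delta2 \<eta> u y\<bar>) \<le> ell \<eta> powr \<alpha> * B"
        by (intro mult_left_mono) auto
      moreover have "ell \<eta> powr \<alpha> * ell \<eta> powr (-\<alpha>) = 1"
        using ell_pos[of \<eta>] that by (simp add: powr_minus)
      ultimately show ?thesis by (simp add: mult.assoc[symmetric] mult.commute)
    qed
    define M where "M = 3/2 * A / hh \<alpha> \<rho> + 2 * PP \<alpha> * B"
    have hr: "hh \<alpha> \<rho> > 0" using hh_pos assms r by simp
    have M_le: "M \<le> 2 * PP \<alpha> * (A / a + B)"
    proof -
      have "a \<le> PP \<alpha> * hh \<alpha> \<rho>" using ell_le_hh[OF assms r] by (simp add: a_def)
      hence "1 / hh \<alpha> \<rho> \<le> PP \<alpha> / a" using ap hr by (simp add: field_simps)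
      hence x: "A * (1 / hh \<alpha> \<rho>) \<le> A * (PP \<alpha> / a)" using A0 by (rule mult_left_mono)
      have y: "0 \<le> A * (PP \<alpha> / a)" using A0 P1 ap by simp
      have "3/2 * A / hh \<alpha> \<rho> = 3/2 * (A * (1 / hh \<alpha> \<rho>))" by simp
      also have "\<dots> \<le> 2 * (A * (PP \<alpha> / a))" using x y by linarith
      also have "\<dots> = 2 * PP \<alpha> * A / a" by simp
      finally have "3/2 * A / hh \<alpha> \<rho> \<le> 2 * PP \<alpha> * A / a" .
      thus ?thesis by (simp add: M_def field_simps)
    qed
    have "S1 \<le> ereal (2 * PP \<alpha> * (A / a + B))"
      unfolding S1_def
    proof (rule SUP_least)
      fix \<epsilon> assume e: "\<epsilon> \<in> {0<..<\<rho>}"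
      have sn: "supnorm (delta1 \<epsilon> u) (-\<rho>) (\<rho> - \<epsilon>) \<le> ereal (M * hh \<alpha> \<epsilon>)"
        unfolding supnorm_def
      proof (rule Sup_least)
        fix z assume "z \<in> {0} \<union> (\<lambda>x. ereal \<bar>delta1 \<epsilon> u x\<bar>) ` {- \<rho><..<\<rho> - \<epsilon>}"
        then show "z \<le> ereal (M * hh \<alpha> \<epsilon>)"
        proof
          assume "z \<in> {0}"
          moreover have "M \<ge> 0" using A0 B0 hr P1 by (simp add: M_def)
          ultimately show ?thesis using hh_pos[OF assms, of \<epsilon>] e by simp
        next
          assume "z \<in> (\<lambda>x. ereal \<bar>delta1 \<epsilon> u x\<bar>) ` {- \<rho><..<\<rho> - \<epsilon>}"
          then obtain x where x: "x \<in> {- \<rho><..<\<rho> - \<epsilon>}" and z: "z = ereal \<bar>delta1 \<epsilon> u x\<bar>" by auto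
          show ?thesis using core[OF assms r A0 B0 HA HB e x] z by (simp add: M_def)
        qed
      qed
      have "ereal (ell \<epsilon> powr (-\<alpha>)) * supnorm (delta1 \<epsilon> u) (-\<rho>) (\<rho> - \<epsilon>)
          \<le> ereal (ell \<epsilon> powr (-\<alpha>)) * ereal (M * hh \<alpha> \<epsilon>)"
        using sn by (intro ereal_mult_left_mono) auto
      also have "\<dots> = ereal (M * (ell \<epsilon> powr (-\<alpha>) * hh \<alpha> \<epsilon>))" by (simp add: algebra_simps)
      also have "ell \<epsilon> powr (-\<alpha>) * hh \<alpha> \<epsilon> \<le> 1"
      proof -
        have "ell \<epsilon> powr (-\<alpha>) * hh \<alpha> \<epsilon> \<le> ell \<epsilon> powr (-\<alpha>) * ell \<epsilon> powr \<alpha>"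
          using hh_le_ell[OF assms, of \<epsilon>] e by (intro mult_left_mono) auto
        also have "\<dots> = 1" using ell_pos[of \<epsilon>] e by (simp add: powr_minus)
        finally show ?thesis .
      qed
      hence "M * (ell \<epsilon> powr (-\<alpha>) * hh \<alpha> \<epsilon>) \<le> M"
        using A0 B0 hr P1 by (simp add: M_def mult_left_le)
      hence "ereal (M * (ell \<epsilon> powr (-\<alpha>) * hh \<alpha> \<epsilon>)) \<le> ereal (2 * PP \<alpha> * (A / a + B))"
        using M_le by simp
      finally show "ereal (ell \<epsilon> powr (-\<alpha>)) * supnorm (delta1 \<epsilon> u) (-\<rho>) (\<rho> - \<epsilon>)
          \<le> ereal (2 * PP \<alpha> * (A / a + B))" .
    qed
    hence "ereal a * S1 \<le> ereal a * ereal (2 * PP \<alpha> * (A / a + B))"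
      using ap by (intro ereal_mult_left_mono) auto
    also have "\<dots> = ereal (2 * PP \<alpha>) * (Os + ereal a * S2)"
    proof -
      have "ereal a * ereal (2 * PP \<alpha> * (A / a + B)) = ereal (a * (2 * PP \<alpha> * (A / a + B)))" by simp
      also have "a * (2 * PP \<alpha> * (A / a + B)) = 2 * PP \<alpha> * (A + a * B)" using ap by (simp add: field_simps)
      also have "ereal (2 * PP \<alpha> * (A + a * B)) = ereal (2 * PP \<alpha>) * (ereal A + ereal a * ereal B)" by simp
      finally show ?thesis using A B by simp
    qed
    finally show ?thesis .
  qed
qed

end
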